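(* Let $q>0$, $R>0$. For $(\xi,\eta,\sigma)\in\mathbb{R}^3$ and $\zeta=\xi+i\eta$ let $\Psi=(\psi_1,\psi_2)^T$ solve on $[0,R]$ $$d\psi_1=i(q\psi_2-\zeta\psi_1)\,dx+i\sigma\psi_2\circ dW_x,\qquad d\psi_2=i(q\psi_1+\zeta\psi_2)\,dx+i\sigma\psi_1\circ dW_x,\qquad \Psi(0)=(1,0)^T,$$ and set $F(\xi,\eta,\sigma):=\psi_1(R)$. Suppose $\eta_0\in(0,q)$ is such that $F(0,\eta_0,0)=0$ (i.e. $i\eta_0$ is a discrete eigenvalue of the deterministic problem with potential $q\mathbf{1}_{[0,R]}$). Then the Jacobian determinant $$\det\begin{pmatrix}\partial_\xi\,\mathrm{Re}F&\partial_\eta\,\mathrm{Re}F\\ \partial_\xi\,\mathrm{Im}F&\partial_\eta\,\mathrm{Im}F\end{pmatrix}$$ at the point $(0,\eta_0,0)$ is nonzero. Equivalently, with $c_0=\sqrt{q^2-\eta_0^2}$, $$\Big(\frac{q^2}{c_0^3}+\frac{R\eta_0}{c_0}\Big)\sin(c_0R)-\frac{R\eta_0^2}{c_0^2}\cos(c_0R)\neq0 .$$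
   Context: At $\sigma=0$ the system is deterministic and $\psi_1(R)=\cos(cR)-\frac{i\zeta}{c}\sin(cR)$ with $c=\sqrt{q^2+\zeta^2}$. *)

theory Defs
  imports "HOL-Analysis.Analysis"
begin

text \<open>Deterministic (sigma = 0) value F(xi,eta,0) = psi_1(R), given in closed form:
  psi_1(R) = cos(cR) - (i zeta / c) sin(cR), c = sqrt(q^2+zeta^2), zeta = xi + i eta.\<close>
definition F0 :: "real \<Rightarrow> real \<Rightarrow> real \<Rightarrow> real \<Rightarrow> complex" where
  "F0 q R xi eta =
     (let zeta = Complex xi eta;
          c = csqrt (complex_of_real (q^2) + zeta^2)
      in cos (c * complex_of_real R) - (\<i> * zeta / c) * sin (c * complex_of_real R))"

end

theory Submission
  imports Defs
begin
lemma derivF: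
  fixes q R eta0 c0 :: real and z0 :: complex
  assumes c0: "c0 > 0" and z0: "z0 = \<i> * of_real eta0" and hc: "c0^2 = q^2 - eta0^2"
  shows "((\<lambda>z. cos (csqrt (complex_of_real (q^2) + z^2) * complex_of_real R) - (\<i> * z / csqrt (complex_of_real (q^2) + z^2)) * sin (csqrt (complex_of_real (q^2) + z^2) * complex_of_real R))
     has_field_derivative - \<i> * of_real (R * eta0 * sin (c0 * R) / c0 + q^2 / c0 ^ 3 * sin (c0 * R) - R * eta0^2 * cos (c0 * R) / c0^2)) (at z0)"
proof -
  have z2: "z0^2 = - of_real (eta0^2)" by (simp add: z0 power_mult_distrib)
  have w: "complex_of_real (q^2) + z0^2 = of_real (c0^2)" unfolding z2 hc by simp
  have nn: "complex_of_real (q^2) + z0^2 \<notin> \<real>\<^sub>\<le>\<^sub>0" unfolding w using c0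
    by (simp add: complex_nonpos_Reals_iff)
  have cs: "csqrt (complex_of_real (q^2) + z0^2) = of_real c0" unfolding w using c0 by (simp add: csqrt_of_real)
  have nn': "(complex_of_real q)^2 + z0^2 \<notin> \<real>\<^sub>\<le>\<^sub>0" using nn by simp
  have cs': "csqrt ((complex_of_real q)^2 + z0^2) = of_real c0" using cs by simp
  have c0ne: "c0 \<noteq> 0" using c0 by simp
  have q2: "q^2 = c0^2 + eta0^2" using hc by simp
  have sR: "sin (complex_of_real c0 * complex_of_real R) = of_real (sin (c0*R))"
    "sin (complex_of_real R * complex_of_real c0) = of_real (sin (c0*R))"
    "cos (complex_of_real c0 * complex_of_real R) = of_real (cos (c0*R))"
    "cos (complex_of_real R * complex_of_real c0) = of_real (cos (c0*R))"
    by (simp_all add: mult.commute flip: of_real_mult sin_of_real cos_of_real)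
  show ?thesis
    apply (rule derivative_eq_intros refl | simp add: cs cs' nn' c0ne)+
    apply (simp add: z0 sR)
    apply (simp add: q2 flip: of_real_power)
    apply (simp add: c0ne complex_eq_iff field_simps power2_eq_square power3_eq_cube)
    done
qed

lemma re_im_deriv:
  assumes "(h has_vector_derivative (D::complex)) (at x)"
  shows "((\<lambda>t. Re (h t)) has_real_derivative Re D) (at x)"
    and "((\<lambda>t. Im (h t)) has_real_derivative Im D) (at x)"
proof -
  have h: "(h has_derivative (\<lambda>t. t *\<^sub>R D)) (at x)" using assms by (simp add: has_vector_derivative_def)
  have "((\<lambda>t. Re (h t)) has_derivative (\<lambda>t. Re (t *\<^sub>R D))) (at x)" by (rule has_derivative_Re[OF h])
  moreover have "(\<lambda>t. Re (t *\<^sub>R D)) = (*) (Re D)" by (auto simp: mult.commute)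
  ultimately show "((\<lambda>t. Re (h t)) has_real_derivative Re D) (at x)" by (simp add: has_field_derivative_def)
  have "((\<lambda>t. Im (h t)) has_derivative (\<lambda>t. Im (t *\<^sub>R D))) (at x)" by (rule has_derivative_Im[OF h])
  moreover have "(\<lambda>t. Im (t *\<^sub>R D)) = (*) (Im D)" by (auto simp: mult.commute)
  ultimately show "((\<lambda>t. Im (h t)) has_real_derivative Im D) (at x)" by (simp add: has_field_derivative_def)
qed

lemma vd1: "((\<lambda>x::real. Complex x e) has_vector_derivative 1) (at x)"
  unfolding Complex_eq by (auto intro!: derivative_eq_intros)

lemma vd2: "((\<lambda>y::real. Complex 0 y) has_vector_derivative \<i>) (at x)"
  unfolding Complex_eq by (auto intro!: derivative_eq_intros)

theorem mainTheorem6: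
  fixes q R eta0 :: real
  assumes "q > 0" and "R > 0"
    and "0 < eta0" and "eta0 < q"
    and "F0 q R 0 eta0 = 0"
  shows "(\<lambda>p. F0 q R (fst p) (snd p)) differentiable at (0, eta0)
    \<and> deriv (\<lambda>x. Re (F0 q R x eta0)) 0 * deriv (\<lambda>y. Im (F0 q R 0 y)) eta0
      - deriv (\<lambda>y. Re (F0 q R 0 y)) eta0 * deriv (\<lambda>x. Im (F0 q R x eta0)) 0 \<noteq> 0"
proof -
  define f where "f = (\<lambda>z. cos (csqrt (complex_of_real (q^2) + z^2) * complex_of_real R) - (\<i> * z / csqrt (complex_of_real (q^2) + z^2)) * sin (csqrt (complex_of_real (q^2) + z^2) * complex_of_real R))"
  have Ff: "F0 q R x y = f (Complex x y)" for x y unfolding F0_def f_def Let_def by simp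
  define c0 where "c0 = sqrt (q^2 - eta0^2)"
  have qe: "eta0^2 < q^2" using assms by (simp add: power_strict_mono)
  have c0: "c0 > 0" unfolding c0_def using qe by simp
  have c0ne: "c0 \<noteq> 0" using c0 by simp
  have hc: "c0^2 = q^2 - eta0^2" unfolding c0_def using qe by simp
  define z0 where "z0 = \<i> * complex_of_real eta0"
  have z0C: "Complex 0 eta0 = z0" unfolding z0_def by (simp add: Complex_eq)
  define K where "K = R * eta0 * sin (c0 * R) / c0 + q^2 / c0 ^ 3 * sin (c0 * R) - R * eta0^2 * cos (c0 * R) / c0^2"
  have df: "(f has_field_derivative - \<i> * of_real K) (at z0)"
    unfolding f_def K_def by (rule derivF[OF c0 z0_def hc])
  have z2: "z0^2 = - of_real (eta0^2)" by (simp add: z0_def power_mult_distrib)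
  have w: "complex_of_real (q^2) + z0^2 = of_real (c0^2)" unfolding z2 hc by simp
  have cs: "csqrt (complex_of_real (q^2) + z0^2) = of_real c0" unfolding w using c0 by (simp add: csqrt_of_real)
  have sR: "sin (complex_of_real c0 * complex_of_real R) = of_real (sin (c0*R))"
    "cos (complex_of_real c0 * complex_of_real R) = of_real (cos (c0*R))"
    by (simp_all flip: of_real_mult sin_of_real cos_of_real)
  have fv: "f z0 = of_real (cos (c0*R) + eta0 / c0 * sin (c0*R))"
    unfolding f_def cs sR by (simp add: z0_def)
  have fz: "f z0 = 0" using assms(5) Ff[of 0 eta0] z0C by simp
  have G: "cos (c0*R) + eta0 / c0 * sin (c0*R) = 0"
    using fz unfolding fv by (metis of_real_eq_0_iff)
  have cosv: "cos (c0*R) = - eta0 / c0 * sin (c0*R)" using G by simp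
  have sne: "sin (c0*R) \<noteq> 0"
  proof
    assume "sin (c0*R) = 0"
    then have "cos (c0*R) = 0" using cosv by simp
    with \<open>sin (c0*R) = 0\<close> show False using sin_cos_squared_add[of "c0*R"] by simp
  qed
  have Kf: "K = sin (c0*R) * (R * eta0 / c0 + q^2 / c0^3 + R * eta0^3 / c0^3)"
    unfolding K_def cosv using c0ne by (simp add: field_simps power2_eq_square power3_eq_cube)
  have "R * eta0 / c0 + q^2 / c0^3 + R * eta0^3 / c0^3 > 0"
    using assms c0 by (intro add_pos_pos divide_pos_pos mult_pos_pos) auto
  then have Kne: "K \<noteq> 0" using Kf sne by simp
  have dx: "((\<lambda>x. f (Complex x eta0)) has_vector_derivative 1 * (- \<i> * of_real K)) (at 0)"
    using field_vector_diff_chain_at[OF vd1[of eta0 0]] df z0C by (simp add: o_def)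
  have dy: "((\<lambda>y. f (Complex 0 y)) has_vector_derivative \<i> * (- \<i> * of_real K)) (at eta0)"
    using field_vector_diff_chain_at[OF vd2[of eta0] df[folded z0C]] by (simp only: o_def)
  have e1: "deriv (\<lambda>x. Re (F0 q R x eta0)) 0 = 0"
    using DERIV_imp_deriv[OF re_im_deriv(1)[OF dx]] by (simp add: Ff)
  have e2: "deriv (\<lambda>x. Im (F0 q R x eta0)) 0 = - K"
    using DERIV_imp_deriv[OF re_im_deriv(2)[OF dx]] by (simp add: Ff)
  have e3: "deriv (\<lambda>y. Re (F0 q R 0 y)) eta0 = K"
    using DERIV_imp_deriv[OF re_im_deriv(1)[OF dy]] by (simp add: Ff)
  have e4: "deriv (\<lambda>y. Im (F0 q R 0 y)) eta0 = 0"
    using DERIV_imp_deriv[OF re_im_deriv(2)[OF dy]] by (simp add: Ff)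
  have dl: "(\<lambda>p::real\<times>real. Complex (fst p) (snd p)) differentiable at (0, eta0)"
  proof -
    have bl1: "bounded_linear (\<lambda>p::real\<times>real. complex_of_real (fst p))"
      by (rule bounded_linear_compose[OF bounded_linear_of_real bounded_linear_fst])
    have bl2: "bounded_linear (\<lambda>p::real\<times>real. complex_of_real (snd p))"
      by (rule bounded_linear_compose[OF bounded_linear_of_real bounded_linear_snd])
    have bl3: "bounded_linear (\<lambda>p::real\<times>real. \<i> * complex_of_real (snd p))"
      by (rule bounded_linear_compose[OF bounded_linear_mult_right bl2])
    show ?thesis unfolding Complex_eq
      by (rule bounded_linear_imp_differentiable[OF bounded_linear_add[OF bl1 bl3]])
  qed
  have fd: "f differentiable at (Complex (fst (0::real, eta0)) (snd (0::real, eta0)))"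
    using field_differentiable_imp_differentiable[of f] df z0C
    by (auto simp: field_differentiable_def)
  have "(f \<circ> (\<lambda>p::real\<times>real. Complex (fst p) (snd p))) differentiable at (0, eta0)"
    by (rule differentiable_chain_at[OF dl]) (use fd in simp)
  then have D: "(\<lambda>p. F0 q R (fst p) (snd p)) differentiable at (0, eta0)"
    by (simp add: Ff o_def)
  show ?thesis using D e1 e2 e3 e4 Kne by simp
qed
end
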